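(* Let $A,B\in\mathbb{R}^{n\times n}$ be symmetric matrices. Suppose one of the following holds: (S1) $I_{\succeq}(A,B)$ contains more than one point; (S2) $I_{\succeq}(B,A)$ contains more than one point; (S3) $Q(A)\cap Q(B)=N(A)\cap N(B)$ and $\dim\{N(A)\cap N(B)\}\neq n-2$. Then $A$ and $B$ are simultaneously diagonalizable via congruence.
   Context: $I_{\succeq}(A,B)=\{\sigma\in\mathbb{R}: A+\sigma B\succeq 0\}$ (positive semidefinite), $Q(A)=\{v\in\mathbb{R}^n: v^TAv=0\}$, $N(A)=\{v: Av=0\}$. $A$ and $B$ are simultaneously diagonalizable via congruence if there is a nonsingular matrix $C$ such that both $C^TAC$ and $C^TBC$ are diagonal. *)

theory Defs
  imports "HOL-Analysis.Analysis"
begin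

definition symmetric_mat :: "real^'n^'n \<Rightarrow> bool" where
  "symmetric_mat M \<longleftrightarrow> transpose M = M"

definition psd :: "real^'n^'n \<Rightarrow> bool" where
  "psd M \<longleftrightarrow> (\<forall>x. x \<bullet> (M *v x) \<ge> 0)"

definition I_psd :: "real^'n^'n \<Rightarrow> real^'n^'n \<Rightarrow> real set" where
  "I_psd A B = {\<sigma>. psd (A + \<sigma> *\<^sub>R B)}"

definition Qset :: "real^'n^'n \<Rightarrow> (real^'n) set" where
  "Qset A = {v. v \<bullet> (A *v v) = 0}"

definition Nset :: "real^'n^'n \<Rightarrow> (real^'n) set" where
  "Nset A = {v. A *v v = 0}"

definition diagonal_mat :: "real^'n^'n \<Rightarrow> bool" where
  "diagonal_mat M \<longleftrightarrow> (\<forall>i j. i \<noteq> j \<longrightarrow> M $ i $ j = 0)"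

definition simul_diag_congruence :: "real^'n^'n \<Rightarrow> real^'n^'n \<Rightarrow> bool" where
  "simul_diag_congruence A B \<longleftrightarrow>
     (\<exists>C::real^'n^'n. invertible C \<and> diagonal_mat (transpose C ** A ** C) \<and> diagonal_mat (transpose C ** B ** C))"

end

theory Submission
  imports Defs
begin

lemma sym_dot:
  assumes "symmetric_mat M"
  shows "x \<bullet> (M *v y) = y \<bullet> (M *v x)"
proof -
  have "x \<bullet> (M *v y) = (x v* M) \<bullet> y" by (simp add: dot_lmul_matrix)
  also have "x v* M = transpose M *v x" by (simp add: vector_transpose_matrix)
  also have "\<dots> = M *v x" using assms by (simp add: symmetric_mat_def)
  finally show ?thesis by (simp add: inner_commute)
qed

lemma qf2:
  assumes "symmetric_mat M"
  shows "(a *\<^sub>R x + b *\<^sub>R y) \<bullet> (M *v (a *\<^sub>R x + b *\<^sub>R y))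
     = a^2 * (x \<bullet> (M *v x)) + 2*a*b * (x \<bullet> (M *v y)) + b^2 * (y \<bullet> (M *v y))"
  using sym_dot[OF assms, of y x]
  by (simp add: matrix_vector_right_distrib matrix_vector_mult_scaleR inner_add_left inner_add_right
      algebra_simps power2_eq_square)

lemma qf3:
  assumes "symmetric_mat M"
  shows "(a *\<^sub>R x + b *\<^sub>R y + c *\<^sub>R w) \<bullet> (M *v (a *\<^sub>R x + b *\<^sub>R y + c *\<^sub>R w))
     = a^2 * (x \<bullet> (M *v x)) + b^2 * (y \<bullet> (M *v y)) + c^2 * (w \<bullet> (M *v w))
       + 2*a*b * (x \<bullet> (M *v y)) + 2*a*c * (x \<bullet> (M *v w)) + 2*b*c * (y \<bullet> (M *v w))"
  using sym_dot[OF assms, of y x] sym_dot[OF assms, of w x] sym_dot[OF assms, of w y]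
  by (simp add: matrix_vector_right_distrib matrix_vector_mult_scaleR inner_add_left inner_add_right
      algebra_simps power2_eq_square)

lemma quad0:
  fixes b c :: real
  assumes "\<And>t. 0 \<le> 2*t*b + t^2*c"
  shows "b = 0"
proof (rule ccontr)
  assume "b \<noteq> 0"
  define k where "k = \<bar>c\<bar> + 1"
  define t where "t = - b / k"
  have pos: "k > 0" unfolding k_def by simp
  have "2*t*b + t^2*c \<le> 2*t*b + t^2*\<bar>c\<bar>"
    by (intro add_left_mono mult_left_mono) auto
  also have "\<dots> = b^2 * (\<bar>c\<bar> - 2*k) / k^2"
    unfolding t_def using pos by (simp add: field_simps power2_eq_square)
  also have "\<dots> < 0"
    using \<open>b \<noteq> 0\<close> pos unfolding k_def by (intro divide_neg_pos mult_pos_neg) auto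
  finally show False using assms[of t] by simp
qed

lemma psd_kernel:
  assumes "symmetric_mat P" "psd P" "x \<bullet> (P *v x) = 0"
  shows "P *v x = 0"
proof -
  have "y \<bullet> (P *v x) = 0" for y
  proof (rule quad0)
    fix t
    have "0 \<le> (1 *\<^sub>R x + t *\<^sub>R y) \<bullet> (P *v (1 *\<^sub>R x + t *\<^sub>R y))"
      using assms(2) unfolding psd_def by blast
    also have "\<dots> = 2*t*(y \<bullet> (P *v x)) + t^2 * (y \<bullet> (P *v y))"
      using qf2[OF assms(1), of 1 x t y] assms(3) sym_dot[OF assms(1), of x y] by simp
    finally show "0 \<le> 2*t*(y \<bullet> (P *v x)) + t^2 * (y \<bullet> (P *v y))" .
  qed
  from this[of "P *v x"] show ?thesis by simp
qed

lemma sym_comb: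
  assumes "symmetric_mat A" "symmetric_mat B"
  shows "symmetric_mat (a *\<^sub>R A + b *\<^sub>R B)"
  using assms unfolding symmetric_mat_def
  by (simp add: transpose_def vec_eq_iff)

lemma hyper_dim:
  fixes S :: "'a::euclidean_space set"
  assumes "subspace S" "v \<in> S" "a \<bullet> v \<noteq> 0"
  shows "dim S = Suc (dim {w\<in>S. a \<bullet> w = 0})"
proof -
  define S' where "S' = {w\<in>S. a \<bullet> w = 0}"
  have subS': "subspace S'"
    unfolding S'_def using assms(1)
    by (simp add: subspace_def inner_add_right inner_scaleR_right)
  have "v \<notin> S'" using assms unfolding S'_def by auto
  hence vn: "v \<notin> span S'" using subS' by (metis span_eq_iff)
  have "S = span (insert v S')"
  proof
    show "S \<subseteq> span (insert v S')"
    proof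
      fix x assume x: "x \<in> S"
      define c where "c = (a \<bullet> x) / (a \<bullet> v)"
      have "x - c *\<^sub>R v \<in> S'"
        unfolding S'_def c_def using x assms
        by (auto simp: subspace_diff subspace_scale inner_diff_right)
      hence "x - c *\<^sub>R v \<in> span (insert v S')" by (meson span_base span_mono subset_insertI subsetD)
      moreover have "c *\<^sub>R v \<in> span (insert v S')" by (simp add: span_base span_mul)
      ultimately have "(x - c *\<^sub>R v) + c *\<^sub>R v \<in> span (insert v S')" by (rule span_add)
      thus "x \<in> span (insert v S')" by simp
    qed
    show "span (insert v S') \<subseteq> S"
      using assms(1,2) unfolding S'_def by (intro span_minimal) auto
  qed
  hence "dim S = dim (insert v S')" by simp
  also have "\<dots> = Suc (dim S')" using vn by (simp add: dim_insert)
  finally show ?thesis unfolding S'_def .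
qed

lemma cont_qf: "continuous_on X (\<lambda>x::real^'n. x \<bullet> (M *v x))"
proof -
  have "linear (\<lambda>x::real^'n. M *v x)" by (simp add: matrix_vector_mul_linear)
  hence "continuous_on X (\<lambda>x::real^'n. M *v x)" by (simp add: linear_continuous_on linear_linear)
  thus ?thesis by (intro continuous_intros)
qed

lemma core_basis:
  fixes P M :: "real^'n^'n"
  assumes symP: "symmetric_mat P" and symM: "symmetric_mat M"
  shows "subspace S \<Longrightarrow> dim S = k \<Longrightarrow> (\<forall>x\<in>S. x \<noteq> 0 \<longrightarrow> x \<bullet> (P *v x) > 0) \<Longrightarrow>
    \<exists>T. T \<subseteq> S \<and> independent T \<and> S \<subseteq> span T \<and>
        (\<forall>u\<in>T. \<forall>v\<in>T. u \<noteq> v \<longrightarrow> u \<bullet> (P *v v) = 0 \<and> u \<bullet> (M *v v) = 0)"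
proof (induction k arbitrary: S)
  case 0
  then have "S \<subseteq> {0}" by (simp add: dim_eq_0)
  then show ?case by (intro exI[of _ "{}"]) (auto simp: independent_empty)
next
  case (Suc k)
  note subS = Suc.prems(1) and posS = Suc.prems(3)
  have "\<not> S \<subseteq> {0}" using Suc.prems(2) by (metis dim_eq_0 nat.distinct(1))
  then obtain x0 where x0: "x0 \<in> S" "x0 \<noteq> 0" by auto
  define Sig where "Sig = S \<inter> sphere 0 1"
  have "compact Sig" unfolding Sig_def
    by (simp add: closed_subspace subS compact_Int_closed[OF compact_sphere] Int_commute
        closed_Int_compact)
  have "x0 /\<^sub>R norm x0 \<in> Sig" unfolding Sig_def using x0 subS by (simp add: subspace_scale)
  hence "Sig \<noteq> {}" by auto
  define g where "g x = (x \<bullet> (M *v x)) / (x \<bullet> (P *v x))" for x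
  have Sigpos: "x \<bullet> (P *v x) > 0" if "x \<in> Sig" for x
    using posS that unfolding Sig_def by auto
  have "continuous_on Sig g" unfolding g_def
    by (intro continuous_on_divide cont_qf) (use Sigpos in force)
  then obtain v where v: "v \<in> Sig" and vmax: "\<And>y. y \<in> Sig \<Longrightarrow> g y \<le> g v"
    using continuous_attains_sup[OF \<open>compact Sig\<close> \<open>Sig \<noteq> {}\<close>] by blast
  define lam where "lam = g v"
  have vS: "v \<in> S" and vnz: "v \<noteq> 0" using v unfolding Sig_def by auto
  have vP: "v \<bullet> (P *v v) > 0" using Sigpos v by auto
  have vM: "v \<bullet> (M *v v) = lam * (v \<bullet> (P *v v))"
    unfolding lam_def g_def using vP by simp
  have bound: "x \<bullet> (M *v x) \<le> lam * (x \<bullet> (P *v x))" if "x \<in> S" for x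
  proof (cases "x = 0")
    case True then show ?thesis by simp
  next
    case False
    define y where "y = (1 / norm x) *\<^sub>R x"
    have "y \<in> Sig" unfolding Sig_def y_def using that False subS by (simp add: subspace_scale)
    hence "g y \<le> lam" using vmax lam_def by auto
    moreover have "y \<bullet> (M *v y) = (1/norm x)^2 * (x \<bullet> (M *v x))"
      "y \<bullet> (P *v y) = (1/norm x)^2 * (x \<bullet> (P *v x))"
      unfolding y_def by (simp_all add: matrix_vector_mult_scaleR power2_eq_square)
    moreover have "x \<bullet> (P *v x) > 0" using posS that False by auto
    ultimately show ?thesis using False by (simp add: g_def divide_le_eq)
  qed
  have key: "w \<bullet> (M *v v) = lam * (w \<bullet> (P *v v))" if w: "w \<in> S" for w
  proof -
    have "lam * (w \<bullet> (P *v v)) - w \<bullet> (M *v v) = 0"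
    proof (rule quad0)
      fix t
      have "1 *\<^sub>R v + t *\<^sub>R w \<in> S" using subS vS w by (simp add: subspace_add subspace_scale)
      from bound[OF this]
      have "0 \<le> lam * ((1 *\<^sub>R v + t *\<^sub>R w) \<bullet> (P *v (1 *\<^sub>R v + t *\<^sub>R w)))
             - (1 *\<^sub>R v + t *\<^sub>R w) \<bullet> (M *v (1 *\<^sub>R v + t *\<^sub>R w))" by simp
      also have "\<dots> = 2*t*(lam * (w \<bullet> (P *v v)) - w \<bullet> (M *v v))
            + t^2 * (lam * (w \<bullet> (P *v w)) - w \<bullet> (M *v w))"
        unfolding qf2[OF symP] qf2[OF symM] using vM sym_dot[OF symP, of v w] sym_dot[OF symM, of v w]
        by (simp add: algebra_simps)
      finally show "0 \<le> 2*t*(lam * (w \<bullet> (P *v v)) - w \<bullet> (M *v v))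
            + t^2 * (lam * (w \<bullet> (P *v w)) - w \<bullet> (M *v w))" .
    qed
    thus ?thesis by simp
  qed
  define S' where "S' = {w\<in>S. (P *v v) \<bullet> w = 0}"
  have subS': "subspace S'"
    unfolding S'_def using subS
    by (simp add: subspace_def inner_add_right inner_scaleR_right)
  have "dim S = Suc (dim S')"
    unfolding S'_def using vP vS subS by (intro hyper_dim) (auto simp: inner_commute)
  hence "dim S' = k" using Suc.prems(2) by simp
  moreover have "\<forall>x\<in>S'. x \<noteq> 0 \<longrightarrow> x \<bullet> (P *v x) > 0" using posS S'_def by auto
  ultimately obtain T' where T': "T' \<subseteq> S'" "independent T'" "S' \<subseteq> span T'"
    "\<forall>u\<in>T'. \<forall>w\<in>T'. u \<noteq> w \<longrightarrow> u \<bullet> (P *v w) = 0 \<and> u \<bullet> (M *v w) = 0"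
    using Suc.IH[OF subS'] by blast
  have "v \<notin> S'" using vP unfolding S'_def by (auto simp: inner_commute)
  have spT': "span T' \<subseteq> S'" using T'(1) subS' by (intro span_minimal)
  have vnT: "v \<notin> span T'" using spT' \<open>v \<notin> S'\<close> by auto
  have orth: "u \<bullet> (P *v v) = 0 \<and> u \<bullet> (M *v v) = 0 \<and> v \<bullet> (P *v u) = 0 \<and> v \<bullet> (M *v u) = 0"
    if "u \<in> T'" for u
  proof -
    have u: "u \<in> S" "(P *v v) \<bullet> u = 0" using that T'(1) unfolding S'_def by auto
    hence "u \<bullet> (P *v v) = 0" by (simp add: inner_commute)
    moreover have "u \<bullet> (M *v v) = 0" using key[OF u(1)] calculation by simp
    ultimately show ?thesis using sym_dot[OF symP, of u v] sym_dot[OF symM, of u v] by simp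
  qed
  show ?case
  proof (intro exI[of _ "insert v T'"] conjI)
    show "insert v T' \<subseteq> S" using vS T'(1) S'_def by auto
    show "independent (insert v T')" using T'(2) vnT by (simp add: independent_insert)
    show "S \<subseteq> span (insert v T')"
    proof
      fix x assume x: "x \<in> S"
      define c where "c = ((P *v v) \<bullet> x) / ((P *v v) \<bullet> v)"
      have "(P *v v) \<bullet> v \<noteq> 0" using vP by (simp add: inner_commute)
      hence "x - c *\<^sub>R v \<in> S'"
        unfolding S'_def c_def using x vS subS
        by (auto simp: subspace_diff subspace_scale inner_diff_right)
      hence "x - c *\<^sub>R v \<in> span (insert v T')" using T'(3) by (meson span_mono subset_insertI subsetD)
      moreover have "c *\<^sub>R v \<in> span (insert v T')" by (simp add: span_base span_mul)
      ultimately have "(x - c *\<^sub>R v) + c *\<^sub>R v \<in> span (insert v T')" by (rule span_add)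
      thus "x \<in> span (insert v T')" by simp
    qed
    show "\<forall>u\<in>insert v T'. \<forall>w\<in>insert v T'. u \<noteq> w \<longrightarrow> u \<bullet> (P *v w) = 0 \<and> u \<bullet> (M *v w) = 0"
      using orth T'(4) by auto
  qed
qed

lemma entry_formula:
  fixes R A :: "real^'n^'n"
  shows "(R ** A ** transpose R) $ i $ j = (R $ i) \<bullet> (A *v (R $ j))"
proof -
  have "(R ** A ** transpose R) $ i $ j = (\<Sum>k\<in>UNIV. (\<Sum>l\<in>UNIV. R$i$l * A$l$k) * R$j$k)"
    by (simp add: matrix_matrix_mult_def transpose_def)
  also have "\<dots> = (\<Sum>k\<in>UNIV. \<Sum>l\<in>UNIV. R$i$l * (A$l$k * R$j$k))"
    by (simp add: sum_distrib_right mult.assoc)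
  also have "\<dots> = (\<Sum>l\<in>UNIV. \<Sum>k\<in>UNIV. R$i$l * (A$l$k * R$j$k))"
    by (rule sum.swap)
  also have "\<dots> = (R $ i) \<bullet> (A *v (R $ j))"
    by (simp add: matrix_vector_mult_def inner_vec_def sum_distrib_left)
  finally show ?thesis .
qed

lemma sdc_from_basis:
  fixes A B :: "real^'n^'n"
  assumes ind: "independent U" and card: "card U = CARD('n)"
    and orth: "\<forall>u\<in>U. \<forall>v\<in>U. u \<noteq> v \<longrightarrow> u \<bullet> (A *v v) = 0 \<and> u \<bullet> (B *v v) = 0"
  shows "simul_diag_congruence A B"
proof -
  have finU: "finite U" using ind by (rule independent_imp_finite)
  obtain c where c: "bij_betw c (UNIV::'n set) U"
    using finite_same_card_bij[OF finite[of "UNIV::'n set"] finU] card by auto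
  define R :: "real^'n^'n" where "R = (\<chi> j. c j)"
  have Rrow: "R $ i = c i" for i unfolding R_def by simp
  have injc: "inj c" using c by (simp add: bij_betw_def)
  have cU: "c i \<in> U" for i using c by (auto simp: bij_betw_def)
  have "invertible R"
    unfolding invertible_right_inverse matrix_right_invertible_independent_rows
  proof (intro allI impI)
    fix k :: "'n \<Rightarrow> real" and i
    assume "(\<Sum>i\<in>UNIV. k i *s row i R) = 0"
    hence s0: "(\<Sum>i\<in>UNIV. k i *\<^sub>R c i) = 0"
      by (simp add: row_def Rrow scalar_mult_eq_scaleR vec_lambda_eta)
    define u where "u v = k (inv_into UNIV c v)" for v
    have "(\<Sum>v\<in>U. u v *\<^sub>R v) = (\<Sum>i\<in>UNIV. u (c i) *\<^sub>R c i)"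
      using sum.reindex_bij_betw[OF c, of "\<lambda>v. u v *\<^sub>R v"] by simp
    also have "\<dots> = 0" using s0 injc by (simp add: u_def)
    finally have "(\<Sum>v\<in>U. u v *\<^sub>R v) = 0" .
    hence "\<forall>v\<in>U. u v = 0" using ind finU by (auto simp: dependent_finite)
    thus "k i = 0" using cU[of i] injc by (auto simp: u_def)
  qed
  define C where "C = transpose R"
  have invC: "invertible C" unfolding C_def using \<open>invertible R\<close> by (rule transpose_invertible)
  have ent: "(transpose C ** M ** C) $ i $ j = c i \<bullet> (M *v c j)" for M i j
    unfolding C_def transpose_transpose entry_formula Rrow ..
  have "diagonal_mat (transpose C ** A ** C)" "diagonal_mat (transpose C ** B ** C)"
    unfolding diagonal_mat_def ent using orth cU injc by (auto simp: inj_eq)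
  thus ?thesis unfolding simul_diag_congruence_def using invC by blast
qed

lemma comb_mv:
  fixes A B :: "real^'n^'n"
  shows "(a *\<^sub>R A + b *\<^sub>R B) *v v = a *\<^sub>R (A *v v) + b *\<^sub>R (B *v v)"
proof -
  have "(a *\<^sub>R A + b *\<^sub>R B) *v v = (a *\<^sub>R A) *v v + (b *\<^sub>R B) *v v"
    by (rule matrix_vector_mult_add_rdistrib)
  also have "(a *\<^sub>R A) *v v = a *\<^sub>R (A *v v)" by (rule scaleR_matrix_vector_assoc[symmetric])
  also have "(b *\<^sub>R B) *v v = b *\<^sub>R (B *v v)" by (rule scaleR_matrix_vector_assoc[symmetric])
  finally show ?thesis .
qed
lemma comb_dot: fixes A B :: "real^'n^'n" shows "u \<bullet> ((a *\<^sub>R A + b *\<^sub>R B) *v v) = a * (u \<bullet> (A *v v)) + b * (u \<bullet> (B *v v))"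
  by (simp add: comb_mv inner_add_right)
lemma subspace_W: "subspace (Nset A \<inter> Nset B)"
  unfolding Nset_def subspace_def by (auto simp: matrix_vector_right_distrib matrix_vector_mult_scaleR)
lemma dimUNIV: "dim (UNIV::(real^'n) set) = CARD('n)"
  by simp
lemma dim_W_S:
  fixes W :: "(real^'n) set"
  assumes "subspace W"
  shows "dim W + dim (orthogonal_comp W) = CARD('n)"
proof -
  have "dim (W \<union> orthogonal_comp W) = dim W + dim (orthogonal_comp W)"
    by (rule dim_orthogonal_sum) (auto simp: orthogonal_comp_def orthogonal_def)
  moreover have "span (W \<union> orthogonal_comp W) = UNIV"
  proof -
    have "x \<in> span (W \<union> orthogonal_comp W)" for x
    proof -
      have "x \<in> W + orthogonal_comp W" using subspace_sum_orthogonal_comp[OF assms] by auto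
      then obtain w s where "w \<in> W" "s \<in> orthogonal_comp W" "x = w + s" by (meson set_plus_elim)
      thus ?thesis by (metis UnCI span_add span_base)
    qed
    thus ?thesis by auto
  qed
  hence "dim (W \<union> orthogonal_comp W) = CARD('n)" by (metis dimUNIV dim_span)
  ultimately show ?thesis by simp
qed


lemma sdc_from_pencil:
  fixes A B :: "real^'n^'n"
  assumes symA: "symmetric_mat A" and symB: "symmetric_mat B"
    and ab: "a \<noteq> 0 \<or> b \<noteq> 0"
    and psdP: "psd (a *\<^sub>R A + b *\<^sub>R B)"
    and ker: "\<forall>x. x \<bullet> ((a *\<^sub>R A + b *\<^sub>R B) *v x) = 0 \<longrightarrow> x \<in> Nset A \<inter> Nset B"
  shows "simul_diag_congruence A B"
proof -
  define W where "W = Nset A \<inter> Nset B"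
  define S where "S = orthogonal_comp W"
  define P where "P = a *\<^sub>R A + b *\<^sub>R B"
  have subW: "subspace W" unfolding W_def by (rule subspace_W)
  have subS: "subspace S" unfolding S_def by (rule subspace_orthogonal_comp)
  have WS0: "W \<inter> S = {0}" unfolding S_def by (rule orthogonal_Int_0[OF subW])
  have symP: "symmetric_mat P" unfolding P_def by (rule sym_comb[OF symA symB])
  have posS: "\<forall>x\<in>S. x \<noteq> 0 \<longrightarrow> x \<bullet> (P *v x) > 0"
  proof (intro ballI impI)
    fix x assume "x \<in> S" "x \<noteq> 0"
    have "x \<bullet> (P *v x) \<ge> 0" using psdP unfolding psd_def P_def by blast
    moreover have "x \<bullet> (P *v x) \<noteq> 0"
    proof
      assume "x \<bullet> (P *v x) = 0"
      hence "x \<in> W" using ker unfolding P_def W_def by blast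
      hence "x \<in> W \<inter> S" using \<open>x \<in> S\<close> by blast
      thus False using WS0 \<open>x \<noteq> 0\<close> by blast
    qed
    ultimately show "x \<bullet> (P *v x) > 0" by simp
  qed
  define M where "M = (if a \<noteq> 0 then B else A)"
  have symM: "symmetric_mat M" unfolding M_def using symA symB by simp
  obtain TS where TS: "TS \<subseteq> S" "independent TS" "S \<subseteq> span TS"
    "\<forall>u\<in>TS. \<forall>v\<in>TS. u \<noteq> v \<longrightarrow> u \<bullet> (P *v v) = 0 \<and> u \<bullet> (M *v v) = 0"
    using core_basis[OF symP symM subS refl posS] by blast
  obtain TW where TW: "TW \<subseteq> W" "independent TW" "W \<subseteq> span TW" "card TW = dim W"
    using basis_exists[of W] by blast
  have finTS: "finite TS" using TS(2) by (rule independent_imp_finite)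
  have finTW: "finite TW" using TW(2) by (rule independent_imp_finite)
  have cardTS: "card TS = dim S" using dim_unique[OF TS(1) TS(3) TS(2) refl] by simp
  have "0 \<notin> TS" using TS(2) by (auto simp: dependent_zero)
  have disj: "TW \<inter> TS = {}"
  proof (rule ccontr)
    assume "TW \<inter> TS \<noteq> {}"
    then obtain x where x: "x \<in> TW" "x \<in> TS" by blast
    hence "x \<in> W \<inter> S" using TW(1) TS(1) by blast
    hence "x = 0" using WS0 by blast
    thus False using x \<open>0 \<notin> TS\<close> by simp
  qed
  define U where "U = TW \<union> TS"
  have finU: "finite U" unfolding U_def using finTS finTW by simp
  have cardU: "card U = CARD('n)"
    unfolding U_def using card_Un_disjoint[OF finTW finTS disj] cardTS TW(4) dim_W_S[OF subW]
    unfolding S_def by simp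
  have spanU: "UNIV \<subseteq> span U"
  proof
    fix x :: "real^'n"
    have "x \<in> W + S" using subspace_sum_orthogonal_comp[OF subW] unfolding S_def by auto
    then obtain w s where ws: "w \<in> W" "s \<in> S" "x = w + s" by (meson set_plus_elim)
    have "w \<in> span U" using ws(1) TW(3) unfolding U_def by (meson span_mono sup_ge1 subsetD)
    moreover have "s \<in> span U" using ws(2) TS(3) unfolding U_def by (meson span_mono sup_ge2 subsetD)
    ultimately show "x \<in> span U" using ws(3) by (simp add: span_add)
  qed
  have indU: "independent U"
    using card_eq_dim[of U UNIV] finU cardU spanU dimUNIV by simp
  have Wnull: "A *v w = 0" "B *v w = 0" if "w \<in> TW" for w
    using that TW(1) unfolding W_def Nset_def by auto
  have orthU: "\<forall>u\<in>U. \<forall>v\<in>U. u \<noteq> v \<longrightarrow> u \<bullet> (A *v v) = 0 \<and> u \<bullet> (B *v v) = 0"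
  proof (intro ballI impI)
    fix u v assume u: "u \<in> U" and v: "v \<in> U" and uv: "u \<noteq> v"
    show "u \<bullet> (A *v v) = 0 \<and> u \<bullet> (B *v v) = 0"
    proof (cases "v \<in> TW")
      case True then show ?thesis using Wnull by simp
    next
      case vTS: False
      show ?thesis
      proof (cases "u \<in> TW")
        case True then show ?thesis using Wnull sym_dot[OF symA, of u v] sym_dot[OF symB, of u v] by simp
      next
        case False
        hence "u \<in> TS" "v \<in> TS" using u v vTS unfolding U_def by auto
        hence o: "u \<bullet> (P *v v) = 0" "u \<bullet> (M *v v) = 0" using TS(4) uv by auto
        show ?thesis
        proof (cases "a \<noteq> 0")
          case True
          then show ?thesis using o unfolding P_def M_def comb_dot by simp
        next
          case False
          then show ?thesis using o ab unfolding P_def M_def comb_dot by simp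
        qed
      qed
    qed
  qed
  show ?thesis by (rule sdc_from_basis[OF indU cardU orthU])
qed

lemma mv2:
  fixes A B :: "real^'n^'n"
  shows "(A + s *\<^sub>R B) *v x = A *v x + s *\<^sub>R (B *v x)"
  by (simp add: matrix_vector_mult_add_rdistrib scaleR_matrix_vector_assoc)

lemma dot2:
  fixes A B :: "real^'n^'n"
  shows "u \<bullet> ((A + s *\<^sub>R B) *v x) = u \<bullet> (A *v x) + s * (u \<bullet> (B *v x))"
  using comb_dot[of u 1 A s B x] by simp

lemma sym2:
  assumes "symmetric_mat A" "symmetric_mat B"
  shows "symmetric_mat (A + s *\<^sub>R B)"
  using sym_comb[OF assms, of 1 s] by simp

lemma S1_case:
  fixes A B :: "real^'n^'n"
  assumes symA: "symmetric_mat A" and symB: "symmetric_mat B"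
    and s: "s \<in> I_psd A B" and t: "t \<in> I_psd A B" and st: "s \<noteq> t"
  shows "simul_diag_congruence A B"
proof (rule sdc_from_pencil[OF symA symB, of 2 "s + t"])
  have ps: "psd (A + s *\<^sub>R B)" and pt: "psd (A + t *\<^sub>R B)" using s t by (auto simp: I_psd_def)
  have e: "x \<bullet> ((2 *\<^sub>R A + (s + t) *\<^sub>R B) *v x) = x \<bullet> ((A + s *\<^sub>R B) *v x) + x \<bullet> ((A + t *\<^sub>R B) *v x)" for x
    unfolding comb_dot[of x 2 A "s+t" B x] unfolding dot2 by (simp add: algebra_simps)
  show "psd (2 *\<^sub>R A + (s + t) *\<^sub>R B)"
    unfolding psd_def e using ps pt unfolding psd_def by (simp add: add_nonneg_nonneg)
  show "\<forall>x. x \<bullet> ((2 *\<^sub>R A + (s + t) *\<^sub>R B) *v x) = 0 \<longrightarrow> x \<in> Nset A \<inter> Nset B"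
  proof (intro allI impI)
    fix x assume "x \<bullet> ((2 *\<^sub>R A + (s + t) *\<^sub>R B) *v x) = 0"
    moreover have "x \<bullet> ((A + s *\<^sub>R B) *v x) \<ge> 0" "x \<bullet> ((A + t *\<^sub>R B) *v x) \<ge> 0"
      using ps pt unfolding psd_def by auto
    ultimately have "x \<bullet> ((A + s *\<^sub>R B) *v x) = 0" "x \<bullet> ((A + t *\<^sub>R B) *v x) = 0"
      unfolding e by linarith+
    hence "(A + s *\<^sub>R B) *v x = 0" "(A + t *\<^sub>R B) *v x = 0"
      using psd_kernel[OF sym2[OF symA symB] ps] psd_kernel[OF sym2[OF symA symB] pt] by auto
    hence e1: "A *v x + s *\<^sub>R (B *v x) = 0" "A *v x + t *\<^sub>R (B *v x) = 0" by (simp_all add: mv2)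
    have "(s - t) *\<^sub>R (B *v x) = (A *v x + s *\<^sub>R (B *v x)) - (A *v x + t *\<^sub>R (B *v x))"
      by (simp add: algebra_simps)
    hence "(s - t) *\<^sub>R (B *v x) = 0" using e1 by simp
    hence "B *v x = 0" using st by simp
    moreover have "A *v x = 0" using e1 calculation by simp
    ultimately show "x \<in> Nset A \<inter> Nset B" by (simp add: Nset_def)
  qed
qed simp

lemma sdc_sym: "simul_diag_congruence A B \<Longrightarrow> simul_diag_congruence B A"
  unfolding simul_diag_congruence_def by blast

lemma dines_indep:
  fixes a1 a2 b1 b2 c1 c2 :: real
  assumes D: "a1*b2 - a2*b1 \<noteq> 0"
  shows "\<exists>s t. s^2*a1 + 2* s*t*c1 + t^2*b1 = a1 + b1 \<and> s^2*a2 + 2* s*t*c2 + t^2*b2 = a2 + b2"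
proof -
  define Dv where "Dv = a1*b2 - a2*b1"
  define al where "al = (c1*b2 - c2*b1)/Dv"
  define be where "be = (a1*c2 - a2*c1)/Dv"
  have Dv0: "Dv \<noteq> 0" using D unfolding Dv_def .
  have "al*a1 + be*b1 = ((c1*b2 - c2*b1)*a1 + (a1*c2 - a2*c1)*b1)/Dv"
    unfolding al_def be_def by (simp add: add_divide_distrib)
  also have "(c1*b2 - c2*b1)*a1 + (a1*c2 - a2*c1)*b1 = c1 * Dv" unfolding Dv_def by (simp add: algebra_simps)
  finally have c1e: "c1 = al*a1 + be*b1" using Dv0 by simp
  have "al*a2 + be*b2 = ((c1*b2 - c2*b1)*a2 + (a1*c2 - a2*c1)*b2)/Dv"
    unfolding al_def be_def by (simp add: add_divide_distrib)
  also have "(c1*b2 - c2*b1)*a2 + (a1*c2 - a2*c1)*b2 = c2 * Dv" unfolding Dv_def by (simp add: algebra_simps)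
  finally have c2e: "c2 = al*a2 + be*b2" using Dv0 by simp
  define sg :: real where "sg = (if al + be \<ge> 0 then 1 else -1)"
  have sgpos: "sg * (al + be) \<ge> 0" unfolding sg_def by auto
  have sg2: "sg^2 = 1" unfolding sg_def by auto
  define p where "p \<tau> = (1-\<tau>)^2 + 2*al* sg*\<tau>*(1-\<tau>)" for \<tau> :: real
  define q where "q \<tau> = \<tau>^2 + 2*be* sg*\<tau>*(1-\<tau>)" for \<tau> :: real
  have "continuous_on {0..1} (\<lambda>\<tau>. q \<tau> - p \<tau>)" unfolding p_def q_def by (intro continuous_intros)
  moreover have "q 0 - p 0 \<le> 0" "0 \<le> q 1 - p 1" unfolding p_def q_def by simp_all
  ultimately obtain \<tau> where \<tau>: "0 \<le> \<tau>" "\<tau> \<le> 1" "q \<tau> - p \<tau> = 0"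
    using IVT'[of "\<lambda>\<tau>. q \<tau> - p \<tau>" 0 0 1] by auto
  have "\<tau>*(1-\<tau>) \<ge> 0" using \<tau> by simp
  hence "sg*(al+be)*(\<tau>*(1-\<tau>)) \<ge> 0" using sgpos by simp
  moreover have "(1-\<tau>)^2 + \<tau>^2 > 0"
    by (cases "\<tau> = 0") (simp_all add: add_nonneg_pos)
  ultimately have "p \<tau> + q \<tau> > 0" unfolding p_def q_def by (simp add: algebra_simps)
  hence ppos: "p \<tau> > 0" using \<tau>(3) by simp
  define r where "r = sqrt (p \<tau>)"
  have r2: "r^2 = p \<tau>" and rpos: "r > 0" unfolding r_def using ppos by simp_all
  define s where "s = (1-\<tau>)/r"
  define t where "t = sg*\<tau>/r"
  have gen: "s^2*a + 2* s*t*(al*a + be*b) + t^2*b = a + b" for a b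
  proof -
    have "s^2*a + 2* s*t*(al*a + be*b) + t^2*b
        = ((1-\<tau>)^2*a + 2*(1-\<tau>)*(sg*\<tau>)*(al*a+be*b) + (sg*\<tau>)^2*b) / r^2"
      unfolding s_def t_def using rpos by (simp add: field_simps power2_eq_square)
    also have "(sg*\<tau>)^2 = \<tau>^2" using sg2 by (simp add: power_mult_distrib)
    also have "(1-\<tau>)^2*a + 2*(1-\<tau>)*(sg*\<tau>)*(al*a+be*b) + \<tau>^2*b = p \<tau> * a + q \<tau> * b"
      unfolding p_def q_def by (simp add: algebra_simps)
    also have "q \<tau> = p \<tau>" using \<tau>(3) by simp
    also have "(p \<tau> * a + p \<tau> * b) / r^2 = a + b" using r2 ppos by (simp add: field_simps)
    finally show ?thesis .
  qed
  show ?thesis using gen[of a1 b1] gen[of a2 b2] c1e c2e by blast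
qed

lemma dines_real:
  fixes a1 a2 b1 b2 c1 c2 :: real
  shows "\<exists>s t. s^2*a1 + 2* s*t*c1 + t^2*b1 = a1 + b1 \<and> s^2*a2 + 2* s*t*c2 + t^2*b2 = a2 + b2"
proof (cases "a1*b2 - a2*b1 = 0")
  case False then show ?thesis by (rule dines_indep)
next
  case D: True
  show ?thesis
  proof (cases "a1 = 0 \<and> a2 = 0")
    case True then show ?thesis by (intro exI[of _ 0] exI[of _ 1]) simp
  next
    case False
    define n where "n = a1^2 + a2^2"
    have npos: "n > 0" unfolding n_def using False by (auto simp: add_pos_nonneg add_nonneg_pos)
    define k where "k = (a1*b1 + a2*b2)/n"
    have D': "a1*b2 = a2*b1" using D by simp
    have "b1 * n = (a1*b1 + a2*b2)*a1" unfolding n_def using D'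
      by (simp add: algebra_simps power2_eq_square; metis mult.assoc mult.commute)
    hence b1e: "b1 = k*a1" using npos unfolding k_def by (simp add: field_simps)
    have "b2 * n = (a1*b1 + a2*b2)*a2" unfolding n_def using D'
      by (simp add: algebra_simps power2_eq_square; metis mult.assoc mult.commute)
    hence b2e: "b2 = k*a2" using npos unfolding k_def by (simp add: field_simps)
    show ?thesis
    proof (cases "1 + k \<ge> 0")
      case True
      then show ?thesis
        by (intro exI[of _ "sqrt (1+k)"] exI[of _ 0]) (simp add: b1e b2e algebra_simps)
    next
      case False
      hence kn: "k < -1" by simp
      hence "1 + 1/k \<ge> 0" by (simp add: field_simps)
      moreover have "a1 = b1/k" "a2 = b2/k" using kn b1e b2e by simp_all
      ultimately show ?thesis
        by (intro exI[of _ 0] exI[of _ "sqrt (1+1/k)"]) (simp add: algebra_simps)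
    qed
  qed
qed

lemma root_quad:
  fixes X Y bb :: real
  assumes "X > 0" "Y < 0"
  shows "\<exists>t>0. X + 2*t*bb + t^2*Y = 0"
proof -
  define q where "q = sqrt (bb^2 - X*Y)"
  have XY: "X*Y < 0" using assms by (simp add: mult_pos_neg)
  have "bb^2 - X*Y \<ge> 0" using XY zero_le_power2[of bb] by linarith
  hence q2: "q^2 = bb^2 - X*Y" unfolding q_def by simp
  have "q > \<bar>bb\<bar>" unfolding q_def using XY
    by (metis abs_ge_zero diff_gt_0_iff_gt diff_strict_left_mono diff_zero real_sqrt_abs
        real_sqrt_less_iff real_sqrt_pow2_iff power2_abs)
  hence qb: "bb + q > 0" by linarith
  define t where "t = (bb + q) / (-Y)"
  have "t > 0" unfolding t_def using qb assms by (simp add: divide_pos_neg)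
  moreover have "X + 2*t*bb + t^2*Y = 0"
  proof -
    have "(X + 2*t*bb + t^2*Y) * Y = X*Y - 2*bb*(bb+q) + (bb+q)^2"
      unfolding t_def using assms by (simp add: field_simps power2_eq_square)
    also have "\<dots> = 0" using q2 by (simp add: algebra_simps power2_eq_square)
    finally show ?thesis using assms by simp
  qed
  ultimately show ?thesis by blast
qed

lemma negabs_le: "0 \<le> z \<Longrightarrow> -(\<bar>a\<bar>*z) \<le> a*(z::real)"
  using mult_right_mono[of "-\<bar>a\<bar>" a z] by simp

lemma root_quartic:
  fixes X a3 a2 a1 c0 :: real
  assumes X: "X > 0" and c0: "c0 < 0"
  shows "\<exists>s>0. X* s^4 + a3* s^3 + a2* s^2 + a1* s + c0 = 0"
proof -
  define f where "f s = X* s^4 + a3* s^3 + a2* s^2 + a1* s + c0" for s :: real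
  define L where "L = \<bar>a3\<bar> + \<bar>a2\<bar> + \<bar>a1\<bar> + \<bar>c0\<bar>"
  define R where "R = 4*L/X + 1"
  have L0: "L \<ge> 0" unfolding L_def by simp
  have R1: "R \<ge> 1" unfolding R_def using L0 X by simp
  have "a3*R^3 \<ge> -\<bar>a3\<bar>*R^3" using R1 negabs_le[of "R^3" a3] by simp
  moreover have "a2*R^2 \<ge> -\<bar>a2\<bar>*R^3"
  proof -
    have "R^2 \<le> R^3" using R1 by (simp add: power_increasing)
    hence "\<bar>a2\<bar>*R^2 \<le> \<bar>a2\<bar>*R^3" by (simp add: mult_left_mono)
    moreover have "a2*R^2 \<ge> -\<bar>a2\<bar>*R^2" using negabs_le[of "R^2" a2] by simp
    ultimately show ?thesis by linarith
  qed
  moreover have "a1*R \<ge> -\<bar>a1\<bar>*R^3"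
  proof -
    have "R \<le> R^3" using R1 power_increasing[of 1 3 R] by simp
    hence "\<bar>a1\<bar>*R \<le> \<bar>a1\<bar>*R^3" by (simp add: mult_left_mono)
    moreover have "a1*R \<ge> -\<bar>a1\<bar>*R" using R1 negabs_le[of R a1] by simp
    ultimately show ?thesis by linarith
  qed
  moreover have "c0 \<ge> -\<bar>c0\<bar>*R^3"
  proof -
    have "1 \<le> R^3" using R1 by simp
    hence "\<bar>c0\<bar>*1 \<le> \<bar>c0\<bar>*R^3" by (intro mult_left_mono) auto
    thus ?thesis by linarith
  qed
  ultimately have fge: "X*R^4 - L*R^3 \<le> f R" unfolding f_def L_def by (simp add: algebra_simps)
  have "0 < R^3 * (3*L + X)" using R1 X L0 by simp
  also have "3*L + X = X*R - L" unfolding R_def using X by (simp add: field_simps)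
  also have "R^3 * (X*R - L) = X*R^4 - L*R^3" by (simp add: algebra_simps power_numeral_reduce)
  also note fge
  finally have fR: "f R > 0" .
  have "continuous_on {0..R} f" unfolding f_def by (intro continuous_intros)
  then obtain s where s: "0 \<le> s" "s \<le> R" "f s = 0"
    using IVT'[of f 0 0 R] fR R1 c0 unfolding f_def by auto
  have "s \<noteq> 0" using s(3) c0 unfolding f_def by auto
  hence "s > 0" using s(1) by simp
  thus ?thesis using s(3) unfolding f_def by blast
qed

lemma caseA:
  fixes M M' :: "real^'n^'n"
  assumes symM: "symmetric_mat M" and symM': "symmetric_mat M'" and subS: "subspace S"
    and H: "\<forall>z\<in>S. z \<noteq> 0 \<longrightarrow> z \<bullet> (M *v z) = 0 \<longrightarrow> z \<bullet> (M' *v z) \<noteq> 0"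
    and x: "x \<in> S" and y: "y \<in> S" and xM: "x \<bullet> (M *v x) = 0" and yM: "y \<bullet> (M *v y) = 0"
    and xyM: "x \<bullet> (M *v y) = 0" and X: "x \<bullet> (M' *v x) > 0" and Y: "y \<bullet> (M' *v y) < 0"
  shows False
proof -
  obtain t where t: "t > 0" "x \<bullet> (M' *v x) + 2*t*(x \<bullet> (M' *v y)) + t^2*(y \<bullet> (M' *v y)) = 0"
    using root_quad[OF X Y] by blast
  define z where "z = 1 *\<^sub>R x + t *\<^sub>R y"
  have zS: "z \<in> S" unfolding z_def using subS x y by (simp add: subspace_add subspace_scale)
  have zM: "z \<bullet> (M *v z) = 0" unfolding z_def qf2[OF symM] using xM yM xyM by simp
  have zM': "z \<bullet> (M' *v z) = 0" unfolding z_def qf2[OF symM'] using t(2) by simp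
  have "z \<noteq> 0"
  proof
    assume "z = 0"
    hence eq: "x = (-t) *\<^sub>R y" unfolding z_def by (simp add: algebra_simps eq_neg_iff_add_eq_0)
    have "x \<bullet> (M' *v x) = ((-t) *\<^sub>R y) \<bullet> (M' *v ((-t) *\<^sub>R y))" using eq by (simp only:)
    also have "\<dots> = t^2 * (y \<bullet> (M' *v y))"
      by (simp only: matrix_vector_mult_scaleR inner_scaleR_left inner_scaleR_right) (simp add: power2_eq_square)
    finally have "x \<bullet> (M' *v x) = t^2 * (y \<bullet> (M' *v y))" .
    moreover have "t^2 * (y \<bullet> (M' *v y)) < 0" using t(1) Y by (simp add: mult_pos_neg)
    ultimately show False using X by simp
  qed
  thus False using H zS zM zM' by blast
qed

lemma hyper_sub: "subspace S \<Longrightarrow> subspace {w\<in>S. a \<bullet> w = 0}"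
  by (simp add: subspace_def inner_add_right inner_scaleR_right)

lemma hyper_dim_ge:
  fixes S :: "'a::euclidean_space set"
  assumes "subspace S"
  shows "dim S \<le> Suc (dim {w\<in>S. a \<bullet> w = 0})"
proof (cases "\<exists>v\<in>S. a \<bullet> v \<noteq> 0")
  case True
  then obtain v where "v \<in> S" "a \<bullet> v \<noteq> 0" by blast
  then show ?thesis using hyper_dim[OF assms] by simp
next
  case False
  hence "{w\<in>S. a \<bullet> w = 0} = S" by auto
  then show ?thesis by simp
qed

lemma conn:
  fixes M M' :: "real^'n^'n"
  assumes symM: "symmetric_mat M" and symM': "symmetric_mat M'" and subS: "subspace S"
    and dS: "dim S \<ge> 3"
    and H: "\<forall>z\<in>S. z \<noteq> 0 \<longrightarrow> z \<bullet> (M *v z) = 0 \<longrightarrow> z \<bullet> (M' *v z) \<noteq> 0"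
    and x: "x \<in> S" and y: "y \<in> S" and xM: "x \<bullet> (M *v x) = 0" and yM: "y \<bullet> (M *v y) = 0"
    and X: "x \<bullet> (M' *v x) > 0" and Y: "y \<bullet> (M' *v y) < 0"
  shows False
proof (cases "x \<bullet> (M *v y) = 0")
  case True
  show False by (rule caseA[OF symM symM' subS H x y xM yM True X Y])
next
  case False
  define d where "d = x \<bullet> (M *v y)"
  have d0: "d \<noteq> 0" using False d_def by simp
  define U1 where "U1 = {w\<in>S. (M *v x) \<bullet> w = 0}"
  define U2 where "U2 = {w\<in>U1. (M *v y) \<bullet> w = 0}"
  have sU1: "subspace U1" unfolding U1_def by (rule hyper_sub[OF subS])
  have sU2: "subspace U2" unfolding U2_def by (rule hyper_sub[OF sU1])
  have "dim S \<le> Suc (dim U1)" unfolding U1_def by (rule hyper_dim_ge[OF subS])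
  moreover have "dim U1 \<le> Suc (dim U2)" unfolding U2_def by (rule hyper_dim_ge[OF sU1])
  ultimately have "dim U2 \<noteq> 0" using dS by linarith
  hence "\<not> U2 \<subseteq> {0}" by (simp add: dim_eq_0)
  then obtain w where wU2: "w \<in> U2" and w0: "w \<noteq> 0" by auto
  have wS: "w \<in> S" and wx: "(M *v x) \<bullet> w = 0" and wy: "(M *v y) \<bullet> w = 0"
    using wU2 unfolding U2_def U1_def by auto
  have xMw: "x \<bullet> (M *v w) = 0" using wx sym_dot[OF symM, of x w] by (simp add: inner_commute)
  have yMw: "y \<bullet> (M *v w) = 0" using wy sym_dot[OF symM, of y w] by (simp add: inner_commute)
  show False
  proof (cases "w \<bullet> (M *v w) = 0")
    case True
    have "w \<bullet> (M' *v w) \<noteq> 0" using H wS w0 True by blast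
    hence "w \<bullet> (M' *v w) > 0 \<or> w \<bullet> (M' *v w) < 0" by linarith
    then show False
    proof
      assume "w \<bullet> (M' *v w) > 0"
      moreover have "w \<bullet> (M *v y) = 0" using yMw sym_dot[OF symM, of y w] by simp
      ultimately show False using caseA[OF symM symM' subS H wS y True yM _ _ Y] by blast
    next
      assume "w \<bullet> (M' *v w) < 0"
      then show False using caseA[OF symM symM' subS H x wS xM True xMw X] by blast
    qed
  next
    case False
    define e where "e = w \<bullet> (M *v w)"
    have e0: "e \<noteq> 0" using False e_def by simp
    define c where "c = - e / (2*d)"
    have c0: "c \<noteq> 0" unfolding c_def using e0 d0 by simp
    have cd: "e + 2*c*d = 0" unfolding c_def using d0 by (simp add: field_simps)
    define Xv where "Xv = x \<bullet> (M' *v x)"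
    define Yv where "Yv = y \<bullet> (M' *v y)"
    define Wv where "Wv = w \<bullet> (M' *v w)"
    define XY where "XY = x \<bullet> (M' *v y)"
    define XW where "XW = x \<bullet> (M' *v w)"
    define YW where "YW = y \<bullet> (M' *v w)"
    have "c^2 * Yv < 0" using c0 Y unfolding Yv_def by (simp add: mult_pos_neg)
    then obtain s where s: "s > 0"
      "Xv* s^4 + (2*XW)* s^3 + (Wv + 2*c*XY)* s^2 + (2*c*YW)* s + c^2*Yv = 0"
      using root_quartic[of Xv "c^2*Yv" "2*XW" "Wv + 2*c*XY" "2*c*YW"] X unfolding Xv_def by blast
    define z where "z = s *\<^sub>R x + (c/s) *\<^sub>R y + 1 *\<^sub>R w"
    have zS: "z \<in> S" unfolding z_def using subS x y wS by (simp add: subspace_add subspace_scale)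
    have zM: "z \<bullet> (M *v z) = 0"
      unfolding z_def qf3[OF symM] using xM yM xMw yMw s(1) cd
      by (simp add: d_def[symmetric] e_def[symmetric] power2_eq_square)
    have "s^2 * (z \<bullet> (M' *v z)) =
        Xv* s^4 + (2*XW)* s^3 + (Wv + 2*c*XY)* s^2 + (2*c*YW)* s + c^2*Yv"
      unfolding z_def qf3[OF symM'] Xv_def[symmetric] Yv_def[symmetric] Wv_def[symmetric]
        XY_def[symmetric] XW_def[symmetric] YW_def[symmetric]
      using s(1) by (simp add: field_simps power2_eq_square power_numeral_reduce)
    hence zM': "z \<bullet> (M' *v z) = 0" using s by simp
    have "z \<noteq> 0"
    proof
      assume "z = 0"
      hence "w = - (s *\<^sub>R x + (c/s) *\<^sub>R y)" unfolding z_def by (simp add: eq_neg_iff_add_eq_0 algebra_simps)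
      hence "(M *v x) \<bullet> w = - (s * ((M *v x) \<bullet> x) + (c/s) * ((M *v x) \<bullet> y))"
        by (simp add: inner_add_right inner_diff_right inner_minus_right)
      moreover have "(M *v x) \<bullet> x = 0" using xM by (simp add: inner_commute)
      moreover have "(M *v x) \<bullet> y = d" unfolding d_def using sym_dot[OF symM, of x y] by (simp add: inner_commute)
      ultimately have "(c/s) * d = 0" using wx by simp
      thus False using c0 d0 s(1) by simp
    qed
    thus False using H zS zM zM' by blast
  qed
qed

definition fq :: "real^'n^'n \<Rightarrow> real^'n^'n \<Rightarrow> real^'n \<Rightarrow> complex" where
  "fq A B x = complex_of_real (x \<bullet> (A *v x)) + \<i> * complex_of_real (x \<bullet> (B *v x))"

lemma fq_Re[simp]: "Re (fq A B x) = x \<bullet> (A *v x)" and fq_Im[simp]: "Im (fq A B x) = x \<bullet> (B *v x)"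
  by (simp_all add: fq_def)

lemma fq_comb:
  assumes "symmetric_mat A" "symmetric_mat B"
  shows "fq A B (s *\<^sub>R x + t *\<^sub>R y) = complex_of_real (s^2) * fq A B x
      + complex_of_real (2* s *t) * (complex_of_real (x \<bullet> (A *v y)) + \<i> * complex_of_real (x \<bullet> (B *v y)))
      + complex_of_real (t^2) * fq A B y"
  by (simp add: complex_eq_iff qf2[OF assms(1)] qf2[OF assms(2)])

lemma fq_scale: "fq A B (r *\<^sub>R x) = complex_of_real (r^2) * fq A B x"
  by (simp add: complex_eq_iff matrix_vector_mult_scaleR power2_eq_square)

lemma fq_zero[simp]: "fq A B 0 = 0"
  by (simp add: complex_eq_iff)

lemma fq_dines:
  assumes symA: "symmetric_mat A" and symB: "symmetric_mat B" and subS: "subspace S"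
    and x: "x \<in> S" and y: "y \<in> S"
  shows "\<exists>z\<in>S. fq A B z = fq A B x + fq A B y"
proof -
  obtain s t where st:
    "s^2 * Re (fq A B x) + 2 * s * t * (x \<bullet> (A *v y)) + t^2 * Re (fq A B y) = Re (fq A B x) + Re (fq A B y)"
    "s^2 * Im (fq A B x) + 2 * s * t * (x \<bullet> (B *v y)) + t^2 * Im (fq A B y) = Im (fq A B x) + Im (fq A B y)"
    using dines_real by blast
  have "s *\<^sub>R x + t *\<^sub>R y \<in> S" using subS x y by (simp add: subspace_add subspace_scale)
  moreover have "fq A B (s *\<^sub>R x + t *\<^sub>R y) = fq A B x + fq A B y"
    unfolding fq_comb[OF symA symB] using st by (simp add: complex_eq_iff)
  ultimately show ?thesis by blast
qed

lemma fq_pointed: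
  fixes A B :: "real^'n^'n"
  assumes symA: "symmetric_mat A" and symB: "symmetric_mat B" and subS: "subspace S"
    and dS: "dim S \<noteq> 2"
    and nd: "\<forall>x\<in>S. x \<noteq> 0 \<longrightarrow> fq A B x \<noteq> 0"
    and x: "x \<in> S" and y: "y \<in> S" and xy: "fq A B x + fq A B y = 0"
  shows "fq A B x = 0"
proof (rule ccontr)
  assume fx: "fq A B x \<noteq> 0"
  hence x0: "x \<noteq> 0" by auto
  show False
  proof (cases "dim S \<le> 1")
    case True
    have "span {x} = span S" using x x0 True by (intro dim_eq_span) auto
    hence "y \<in> span {x}" using y by (simp add: span_base)
    then obtain k where "y = k *\<^sub>R x" by (auto simp: span_singleton)
    hence "fq A B y = complex_of_real (k^2) * fq A B x" by (simp add: fq_scale)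
    hence "complex_of_real (1 + k^2) * fq A B x = 0" using xy by (simp add: algebra_simps)
    moreover have "complex_of_real (1 + k^2) \<noteq> 0"
      by (metis add_pos_nonneg of_real_eq_0_iff zero_le_power2 zero_less_one less_irrefl)
    ultimately show False using fx by simp
  next
    case False
    hence d3: "dim S \<ge> 3" using dS by linarith
    define p where "p = Re (fq A B x)"
    define q where "q = Im (fq A B x)"
    have pq: "p^2 + q^2 > 0" using fx unfolding p_def q_def
      by (simp add: complex_eq_iff sum_power2_gt_zero_iff)
    have yA: "y \<bullet> (A *v y) = -p" and yB: "y \<bullet> (B *v y) = -q"
      using xy unfolding p_def q_def by (simp_all add: complex_eq_iff)
    have xA: "x \<bullet> (A *v x) = p" and xB: "x \<bullet> (B *v x) = q" unfolding p_def q_def by simp_all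
    define M where "M = q *\<^sub>R A + (-p) *\<^sub>R B"
    define M' where "M' = p *\<^sub>R A + q *\<^sub>R B"
    have symM: "symmetric_mat M" unfolding M_def by (rule sym_comb[OF symA symB])
    have symM': "symmetric_mat M'" unfolding M'_def by (rule sym_comb[OF symA symB])
    have H: "\<forall>z\<in>S. z \<noteq> 0 \<longrightarrow> z \<bullet> (M *v z) = 0 \<longrightarrow> z \<bullet> (M' *v z) \<noteq> 0"
    proof (intro ballI impI)
      fix z assume zS: "z \<in> S" and z0: "z \<noteq> 0" and zM: "z \<bullet> (M *v z) = 0"
      show "z \<bullet> (M' *v z) \<noteq> 0"
      proof
        assume zM': "z \<bullet> (M' *v z) = 0"
        define uu where "uu = z \<bullet> (A *v z)"
        define vv where "vv = z \<bullet> (B *v z)"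
        have e1: "q * uu - p * vv = 0" using zM unfolding M_def comb_dot uu_def vv_def by simp
        have e2: "p * uu + q * vv = 0" using zM' unfolding M'_def comb_dot uu_def vv_def by simp
        have "(p^2 + q^2) * uu = q* (q * uu - p * vv) + p* (p * uu + q * vv)" by (simp add: algebra_simps power2_eq_square)
        hence "(p^2 + q^2) * uu = 0" using e1 e2 by simp
        hence "uu = 0" using pq by (metis mult_eq_0_iff less_irrefl)
        moreover have "(p^2 + q^2) * vv = q* (p * uu + q * vv) - p* (q * uu - p * vv)" by (simp add: algebra_simps power2_eq_square)
        hence "(p^2 + q^2) * vv = 0" using e1 e2 by simp
        hence "vv = 0" using pq by (metis mult_eq_0_iff less_irrefl)
        ultimately have "fq A B z = 0" unfolding uu_def vv_def by (simp add: complex_eq_iff)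
        thus False using nd zS z0 by blast
      qed
    qed
    have xM: "x \<bullet> (M *v x) = 0" unfolding M_def comb_dot xA xB by simp
    have yM: "y \<bullet> (M *v y) = 0" unfolding M_def comb_dot yA yB by simp
    have xM': "x \<bullet> (M' *v x) > 0" unfolding M'_def comb_dot xA xB using pq by (simp add: power2_eq_square)
    have yM': "y \<bullet> (M' *v y) < 0" unfolding M'_def comb_dot yA yB using pq by (simp add: power2_eq_square)
    show False by (rule conn[OF symM symM' subS d3 H x y xM yM xM' yM'])
  qed
qed

lemma cont_fq: "continuous_on X (fq A B)"
  unfolding fq_def[abs_def] by (intro continuous_intros cont_qf)

lemma cone_sum:
  assumes symA: "symmetric_mat A" and symB: "symmetric_mat B" and subS: "subspace S"
  shows "finite F \<Longrightarrow> F \<subseteq> fq A B ` S \<Longrightarrow> (\<forall>v\<in>F. 0 \<le> u v) \<Longrightarrow>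
     \<exists>z\<in>S. fq A B z = (\<Sum>v\<in>F. u v *\<^sub>R v)"
proof (induction F rule: finite_induct)
  case empty
  then show ?case using subspace_0[OF subS] by (intro bexI[of _ 0]) auto
next
  case (insert v F)
  then obtain z where z: "z \<in> S" "fq A B z = (\<Sum>v\<in>F. u v *\<^sub>R v)" by auto
  obtain xv where xv: "xv \<in> S" "v = fq A B xv" using insert.prems(1) by auto
  have uv: "u v \<ge> 0" using insert.prems(2) by auto
  define x1 where "x1 = sqrt (u v) *\<^sub>R xv"
  have x1S: "x1 \<in> S" unfolding x1_def using subS xv(1) by (simp add: subspace_scale)
  have fx1: "fq A B x1 = u v *\<^sub>R v"
  proof -
    have "fq A B x1 = complex_of_real ((sqrt (u v))^2) * fq A B xv" unfolding x1_def by (rule fq_scale)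
    also have "(sqrt (u v))^2 = u v" using uv by simp
    finally show ?thesis using xv(2) by (simp add: scaleR_conv_of_real)
  qed
  obtain z' where "z' \<in> S" "fq A B z' = fq A B x1 + fq A B z"
    using fq_dines[OF symA symB subS x1S z(1)] by blast
  then show ?case using fx1 z insert.hyps by (intro bexI[of _ z']) auto
qed

lemma S3_pencil:
  fixes A B :: "real^'n^'n"
  assumes symA: "symmetric_mat A" and symB: "symmetric_mat B"
    and Q: "Qset A \<inter> Qset B = Nset A \<inter> Nset B"
    and d: "int (dim (Nset A \<inter> Nset B)) \<noteq> int CARD('n) - 2"
  shows "\<exists>a b. (a \<noteq> 0 \<or> b \<noteq> 0) \<and> psd (a *\<^sub>R A + b *\<^sub>R B) \<and>
     (\<forall>x. x \<bullet> ((a *\<^sub>R A + b *\<^sub>R B) *v x) = 0 \<longrightarrow> x \<in> Nset A \<inter> Nset B)"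
proof -
  define W where "W = Nset A \<inter> Nset B"
  define S where "S = orthogonal_comp W"
  have subW: "subspace W" unfolding W_def by (rule subspace_W)
  have subS: "subspace S" unfolding S_def by (rule subspace_orthogonal_comp)
  have WS0: "W \<inter> S = {0}" unfolding S_def by (rule orthogonal_Int_0[OF subW])
  have dimsum: "dim W + dim S = CARD('n)" unfolding S_def by (rule dim_W_S[OF subW])
  have dS: "dim S \<noteq> 2" using d dimsum unfolding W_def by auto
  have nd: "\<forall>x\<in>S. x \<noteq> 0 \<longrightarrow> fq A B x \<noteq> 0"
  proof (intro ballI impI notI)
    fix x assume xS: "x \<in> S" and x0: "x \<noteq> 0" and fx: "fq A B x = 0"
    have "x \<bullet> (A *v x) = 0" "x \<bullet> (B *v x) = 0" using fx by (simp_all add: complex_eq_iff)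
    hence "x \<in> Qset A \<inter> Qset B" by (simp add: Qset_def)
    hence "x \<in> W \<inter> S" using Q xS unfolding W_def by simp
    thus False using WS0 x0 by blast
  qed
  define Sig where "Sig = S \<inter> sphere 0 1"
  have SigS: "Sig \<subseteq> S" unfolding Sig_def by auto
  have cSig: "compact Sig" unfolding Sig_def
    by (simp add: closed_subspace subS compact_Int_closed[OF compact_sphere] Int_commute closed_Int_compact)
  define D where "D = convex hull (fq A B ` Sig)"
  have cD: "compact D" unfolding D_def
    by (intro compact_convex_hull compact_continuous_image cont_fq cSig)
  have convD: "convex D" unfolding D_def by simp
  have "0 \<notin> D"
  proof
    assume "0 \<in> D"
    then obtain F u where F: "finite F" "F \<subseteq> fq A B ` Sig" "\<forall>x\<in>F. 0 \<le> u x" "sum u F = 1"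
      "(\<Sum>v\<in>F. u v *\<^sub>R v) = 0"
      unfolding D_def convex_hull_explicit by blast
    obtain v0 where v0: "v0 \<in> F" "u v0 > 0"
    proof (rule ccontr)
      assume "\<not> thesis"
      with that have "\<forall>v\<in>F. u v = 0" using F(3) by force
      hence "sum u F = 0" by simp
      thus False using F(4) by simp
    qed
    have "F - {v0} \<subseteq> fq A B ` S" using F(2) SigS by blast
    then obtain z where z: "z \<in> S" "fq A B z = (\<Sum>v\<in>F - {v0}. u v *\<^sub>R v)"
      using cone_sum[OF symA symB subS, of "F - {v0}" u] F(1,3) by auto
    obtain x0 where x0: "x0 \<in> Sig" "v0 = fq A B x0" using F(2) v0(1) by auto
    define x1 where "x1 = sqrt (u v0) *\<^sub>R x0"
    have x1S: "x1 \<in> S" unfolding x1_def using subS x0(1) SigS by (auto simp: subspace_scale)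
    have fx1: "fq A B x1 = u v0 *\<^sub>R v0"
    proof -
      have "fq A B x1 = complex_of_real ((sqrt (u v0))^2) * fq A B x0" unfolding x1_def by (rule fq_scale)
      also have "(sqrt (u v0))^2 = u v0" using v0(2) by simp
      finally show ?thesis using x0(2) by (simp add: scaleR_conv_of_real)
    qed
    have "(\<Sum>v\<in>F. u v *\<^sub>R v) = u v0 *\<^sub>R v0 + (\<Sum>v\<in>F - {v0}. u v *\<^sub>R v)"
      using F(1) v0(1) by (simp add: sum.remove)
    hence "fq A B x1 + fq A B z = 0" using fx1 z(2) F(5) by simp
    hence "fq A B x1 = 0" using fq_pointed[OF symA symB subS dS nd x1S z(1)] by blast
    hence "x1 = 0" using nd x1S by blast
    moreover have "x0 \<noteq> 0" using x0(1) unfolding Sig_def by auto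
    ultimately show False using v0(2) unfolding x1_def by simp
  qed
  then obtain a b where ab: "a \<noteq> 0" "0 < b" "\<forall>x\<in>D. b < inner a x"
    using separating_hyperplane_closed_0[OF convD compact_imp_closed[OF cD]] by blast
  define P where "P = Re a *\<^sub>R A + Im a *\<^sub>R B"
  have symP: "symmetric_mat P" unfolding P_def by (rule sym_comb[OF symA symB])
  have posS: "x \<bullet> (P *v x) > 0" if xS: "x \<in> S" and x0: "x \<noteq> 0" for x
  proof -
    define r where "r = 1 / norm x"
    have r0: "r > 0" unfolding r_def using x0 by simp
    have "r *\<^sub>R x \<in> Sig" unfolding Sig_def r_def using xS x0 subS by (simp add: subspace_scale)
    hence "fq A B (r *\<^sub>R x) \<in> D" unfolding D_def by (simp add: hull_inc)
    hence "0 < inner a (fq A B (r *\<^sub>R x))" using ab by force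
    also have "inner a (fq A B (r *\<^sub>R x)) = r^2 * (x \<bullet> (P *v x))"
      unfolding fq_scale P_def comb_dot by (simp add: inner_complex_def algebra_simps)
    finally show ?thesis using r0 by (simp add: zero_less_mult_iff)
  qed
  have Pw: "P *v w = 0" if "w \<in> W" for w
    using that unfolding P_def comb_mv W_def Nset_def by simp
  have dec: "\<exists>w s. w \<in> W \<and> s \<in> S \<and> x = w + s \<and> x \<bullet> (P *v x) = s \<bullet> (P *v s)" for x
  proof -
    have "x \<in> W + S" using subspace_sum_orthogonal_comp[OF subW] unfolding S_def by auto
    then obtain w s where ws: "w \<in> W" "s \<in> S" "x = w + s" by (meson set_plus_elim)
    have "x \<bullet> (P *v x) = w \<bullet> (P *v s) + s \<bullet> (P *v s)"
      using Pw[OF ws(1)] unfolding ws(3) by (simp add: matrix_vector_right_distrib inner_add_left)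
    also have "w \<bullet> (P *v s) = 0" using sym_dot[OF symP, of w s] Pw[OF ws(1)] by simp
    finally show ?thesis using ws by auto
  qed
  show ?thesis
  proof (rule exI[of _ "Re a"], rule exI[of _ "Im a"], intro conjI)
    show "Re a \<noteq> 0 \<or> Im a \<noteq> 0" using ab(1) by (simp add: complex_eq_iff)
    show "psd (Re a *\<^sub>R A + Im a *\<^sub>R B)" unfolding psd_def P_def[symmetric]
    proof
      fix x
      obtain w s where "w \<in> W" "s \<in> S" "x = w + s" "x \<bullet> (P *v x) = s \<bullet> (P *v s)" using dec by blast
      thus "0 \<le> x \<bullet> (P *v x)" using posS[of s] by (cases "s = 0") auto
    qed
    show "\<forall>x. x \<bullet> ((Re a *\<^sub>R A + Im a *\<^sub>R B) *v x) = 0 \<longrightarrow> x \<in> Nset A \<inter> Nset B"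
    proof (intro allI impI)
    fix x assume "x \<bullet> ((Re a *\<^sub>R A + Im a *\<^sub>R B) *v x) = 0"
    hence x0: "x \<bullet> (P *v x) = 0" unfolding P_def .
    obtain w s where ws: "w \<in> W" "s \<in> S" "x = w + s" "x \<bullet> (P *v x) = s \<bullet> (P *v s)" using dec by blast
    have "s = 0" using posS[OF ws(2)] x0 ws(4) by force
    thus "x \<in> Nset A \<inter> Nset B" using ws unfolding W_def by simp
    qed
  qed
qed

theorem corollary1:
  fixes A B :: "real^'n^'n"
  assumes "symmetric_mat A" and "symmetric_mat B"
    and "(\<exists>s t. s \<in> I_psd A B \<and> t \<in> I_psd A B \<and> s \<noteq> t)
       \<or> (\<exists>s t. s \<in> I_psd B A \<and> t \<in> I_psd B A \<and> s \<noteq> t)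
       \<or> (Qset A \<inter> Qset B = Nset A \<inter> Nset B
          \<and> int (dim (Nset A \<inter> Nset B)) \<noteq> int CARD('n) - 2)"
  shows "simul_diag_congruence A B"
  using assms(3)
proof (elim disjE exE conjE)
  fix s t assume "s \<in> I_psd A B" "t \<in> I_psd A B" "s \<noteq> t"
  then show ?thesis using S1_case[OF assms(1,2)] by blast
next
  fix s t assume "s \<in> I_psd B A" "t \<in> I_psd B A" "s \<noteq> t"
  then show ?thesis using S1_case[OF assms(2,1)] sdc_sym by blast
next
  assume "Qset A \<inter> Qset B = Nset A \<inter> Nset B" "int (dim (Nset A \<inter> Nset B)) \<noteq> int CARD('n) - 2"
  then obtain a b where "a \<noteq> 0 \<or> b \<noteq> 0" "psd (a *\<^sub>R A + b *\<^sub>R B)"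
     "\<forall>x. x \<bullet> ((a *\<^sub>R A + b *\<^sub>R B) *v x) = 0 \<longrightarrow> x \<in> Nset A \<inter> Nset B"
    using S3_pencil[OF assms(1,2)] by blast
  then show ?thesis using sdc_from_pencil[OF assms(1,2)] by blast
qed

end
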